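(* Let $G$ be a closed and continuous metric cyclic graph whose vertex set $V$ is homeomorphic to $S^1$, and let $u\in V$. Then the map $[0,\gamma_V(u)]\to V$, $r\mapsto g_r(u)$, is continuous.
   Context: Identify $S^1$ with $[0,1)$; $d_{S^1}(x,y)\in[0,1)$ is the normalized counterclockwise distance from $x$ to $y$, and $[x,y]_V$ denotes the set of points of $V$ on the closed counterclockwise arc from $x$ to $y$. A directed graph $G=(V,E)$ (no loops, no opposite edges) with $V\subseteq S^1$ is cyclic if whenever $u_0\to u_1$, every $w\in V$ strictly counterclockwise-between $u_0$ and $u_1$ has $u_0\to w$ and $w\to u_1$. Define $\gamma_m(u_0)=\sup\{\sum_{i=0}^{m-1}d_{S^1}(u_i,u_{i+1}):u_0\to\cdots\to u_m\text{ in }G\}$ and $f_1(u)=u+\gamma_1(u)\bmod1$. $G$ is closed if $V$ is closed in $S^1$ (then $f_1(u)\in V$), and continuous if every $\gamma_m$ is continuous. $G$ is metric if $V$ carries a metric $d_V$ inducing the subspace topology from $S^1$ such that $d_V(u_0,u_1)<d_V(u_0,u_2)$ for every directed path $u_0\to u_1\to u_2$. Set $\gamma_V(u)=d_V(u,f_1(u))$. For $r\in[0,\gamma_V(u)]$, $g_r(u)$ is the unique point $w\in[u,f_1(u)]_V$ with $d_V(u,w)=r$. *)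

theory Defs
  imports "HOL-Analysis.Analysis"
begin

text \<open>S^1 is identified with [0,1); the point x corresponds to exp(2 pi i x).\<close>

definition circ_emb :: "real \<Rightarrow> complex" where
  "circ_emb x = cis (2 * pi * x)"

definition dS1 :: "real \<Rightarrow> real \<Rightarrow> real" where
  "dS1 x y = frac (y - x)"

definition arc :: "real set \<Rightarrow> real \<Rightarrow> real \<Rightarrow> real set" where
  "arc V x y = {w \<in> V. dS1 x w \<le> dS1 x y}"

definition S1top :: "real set \<Rightarrow> real topology" where
  "S1top V = pullback_topology V circ_emb (top_of_set (sphere 0 1))"

definition circ_digraph :: "real set \<Rightarrow> (real \<times> real) set \<Rightarrow> bool" where
  "circ_digraph V E \<longleftrightarrow> V \<subseteq> {0..<1} \<and> E \<subseteq> V \<times> V \<and>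
     (\<forall>x. (x, x) \<notin> E) \<and> (\<forall>x y. (x, y) \<in> E \<longrightarrow> (y, x) \<notin> E)"

definition cyclic_graph :: "real set \<Rightarrow> (real \<times> real) set \<Rightarrow> bool" where
  "cyclic_graph V E \<longleftrightarrow> circ_digraph V E \<and>
     (\<forall>u0 u1 w. (u0, u1) \<in> E \<longrightarrow> w \<in> V \<longrightarrow> 0 < dS1 u0 w \<longrightarrow> dS1 u0 w < dS1 u0 u1 \<longrightarrow>
        (u0, w) \<in> E \<and> (w, u1) \<in> E)"

text \<open>gamma_m(u0): supremum of total length of directed paths u0 -> ... -> um.
  (The value 0 is included so that a vertex without such paths gets gamma = 0; since all
  lengths are nonnegative this does not change the supremum otherwise.)\<close>
definition gamma :: "(real \<times> real) set \<Rightarrow> nat \<Rightarrow> real \<Rightarrow> real" where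
  "gamma E m u0 = Sup (insert 0 {(\<Sum>i<m. dS1 (us i) (us (Suc i))) | us.
      us 0 = u0 \<and> (\<forall>i<m. (us i, us (Suc i)) \<in> E)})"

definition f1 :: "(real \<times> real) set \<Rightarrow> real \<Rightarrow> real" where
  "f1 E u = frac (u + gamma E 1 u)"

definition closed_graph :: "real set \<Rightarrow> bool" where
  "closed_graph V \<longleftrightarrow> closed (circ_emb ` V)"

definition continuous_graph :: "real set \<Rightarrow> (real \<times> real) set \<Rightarrow> bool" where
  "continuous_graph V E \<longleftrightarrow> (\<forall>m. continuous_map (S1top V) euclideanreal (gamma E m))"

definition metric_for :: "real set \<Rightarrow> (real \<times> real) set \<Rightarrow> (real \<Rightarrow> real \<Rightarrow> real) \<Rightarrow> bool" where
  "metric_for V E dV \<longleftrightarrow> Metric_space V dV \<and> Metric_space.mtopology V dV = S1top V \<and>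
     (\<forall>u0 u1 u2. (u0, u1) \<in> E \<longrightarrow> (u1, u2) \<in> E \<longrightarrow> dV u0 u1 < dV u0 u2)"

definition gammaV :: "(real \<times> real) set \<Rightarrow> (real \<Rightarrow> real \<Rightarrow> real) \<Rightarrow> real \<Rightarrow> real" where
  "gammaV E dV u = dV u (f1 E u)"

definition g :: "real set \<Rightarrow> (real \<times> real) set \<Rightarrow> (real \<Rightarrow> real \<Rightarrow> real) \<Rightarrow> real \<Rightarrow> real \<Rightarrow> real" where
  "g V E dV r u = (THE w. w \<in> arc V u (f1 E u) \<and> dV u w = r)"

end

theory Submission
  imports Defs
begin

lemma frac_sub1: "frac (frac a - b) = frac (a - (b::real))"
  by (metis diff_conv_add_uminus frac_add_simps(1))

lemma cis_frac: "cis (2 * pi * frac x) = cis (2 * pi * x)"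
proof -
  have "cis (2 * pi * frac x) = cis (2 * pi * x - 2 * pi * of_int (floor x))"
    by (simp add: frac_def right_diff_distrib)
  also have "\<dots> = cis (2 * pi * x) / cis (2 * pi * of_int (floor x))"
    by (rule cis_divide[symmetric])
  also have "\<dots> = cis (2 * pi * x)" by (simp add: cis_multiple_2pi)
  finally show ?thesis .
qed

lemma cis_inj01:
  assumes "x \<in> {0..<1}" "y \<in> {0..<1}" "cis (2 * pi * x) = cis (2 * pi * y)"
  shows "x = y"
proof -
  have "cis (2 * pi * (x - y)) = 1"
    using assms(3) by (metis cis_divide divide_self_if cis_neq_zero right_diff_distrib)
  then have "exp (\<i> * complex_of_real (2 * pi * (x - y))) = 1"
    by (simp add: cis_conv_exp)
  then obtain n :: int where n: "2 * pi * (x - y) = of_int (2 * n) * pi"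
    by (auto simp: exp_eq_1)
  then have "pi * (2 * (x - y)) = pi * (2 * of_int n)" by (simp add: algebra_simps)
  then have "2 * (x - y) = 2 * of_int n" using pi_gt_zero by (simp only: mult_left_cancel)
  then have "x - y = of_int n" by simp
  moreover have "\<bar>x - y\<bar> < 1" using assms(1,2) by auto
  ultimately have "\<bar>real_of_int n\<bar> < 1" by simp
  then have "\<bar>n\<bar> < 1" by linarith
  then have "n = 0" by simp
  with \<open>x - y = of_int n\<close> show ?thesis by simp
qed

lemma sphere_full:
  fixes F :: "complex \<Rightarrow> complex"
  assumes cont: "continuous_on (sphere 0 1) F" and inj: "inj_on F (sphere 0 1)"
    and im: "F ` sphere 0 1 \<subseteq> sphere 0 1"
  shows "F ` sphere 0 1 = sphere 0 1"
proof (rule ccontr)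
  assume "F ` sphere 0 1 \<noteq> sphere 0 1"
  then obtain b where b: "b \<in> sphere 0 1" "b \<notin> F ` sphere 0 1" using im by blast
  define T where "T = {x::complex. 1 \<bullet> x = 0}"
  have "(sphere (0::complex) 1 - {b}) homeomorphic T"
    unfolding T_def by (rule homeomorphic_punctured_sphere_hyperplane) (use b in auto)
  then obtain h k where hk: "homeomorphism (sphere 0 1 - {b}) T h k"
    unfolding homeomorphic_def by blast
  have affT: "affine T" unfolding T_def by (rule affine_hyperplane)
  have dimT: "aff_dim T = 1" unfolding T_def using aff_dim_hyperplane[of "1::complex" 0] by simp
  have Fim: "F ` sphere 0 1 \<subseteq> sphere 0 1 - {b}" using im b by blast
  have contG: "continuous_on (sphere 0 1) (h \<circ> F)"
    by (rule continuous_on_compose[OF cont]) (meson Fim continuous_on_subset homeomorphism_cont1 hk)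
  have injG: "inj_on (h \<circ> F) (sphere 0 1)"
  proof (rule comp_inj_on[OF inj])
    have "inj_on h (sphere 0 1 - {b})"
      by (rule inj_on_inverseI[where g=k]) (use hk homeomorphism_apply1 in blast)
    then show "inj_on h (F ` sphere 0 1)" using Fim inj_on_subset by blast
  qed
  have Gim: "(h \<circ> F) \<in> sphere 0 1 \<rightarrow> T"
    using Fim hk homeomorphism_image1 by fastforce
  have op: "openin (top_of_set T) ((h \<circ> F) ` sphere 0 1)"
    by (rule invariance_of_domain_sphere_affine_set[OF contG injG Gim _ affT, where a=0]) (auto simp: dimT)
  have cpt: "compact ((h \<circ> F) ` sphere 0 1)"
    by (rule compact_continuous_image[OF contG]) simp
  have cl: "closedin (top_of_set T) ((h \<circ> F) ` sphere 0 1)"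
    using Gim cpt by (intro closed_subset compact_imp_closed) auto
  have conT: "connected T" using affT affine_imp_convex convex_connected by blast
  have ne: "(h \<circ> F) ` sphere 0 1 \<noteq> {}"
  proof -
    have "(1::complex) \<in> sphere 0 1" by simp
    then show ?thesis by blast
  qed
  have "(h \<circ> F) ` sphere 0 1 = T"
    using conT op cl ne unfolding connected_clopen by blast
  then have "bounded T" using cpt compact_imp_bounded by metis
  then have "T = {} \<or> (\<exists>a. T = {a})" using affine_bounded_eq_trivial[OF affT] by simp
  moreover have "0 \<in> T" "\<i> \<in> T" unfolding T_def by (auto simp: inner_complex_def)
  ultimately show False by auto
qed

lemma topspace_S1top: "topspace (S1top V) = V"
  unfolding S1top_def topspace_pullback_topology by (auto simp: circ_emb_def)

lemma V_full:
  assumes sub: "V \<subseteq> {0..<1}" and hom: "S1top V homeomorphic_space top_of_set (sphere (0::complex) 1)"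
    and x: "x \<in> {0..<1}"
  shows "x \<in> V"
proof -
  obtain \<phi> \<psi> where hm: "homeomorphic_maps (S1top V) (top_of_set (sphere (0::complex) 1)) \<phi> \<psi>"
    using hom unfolding homeomorphic_space_def by blast
  have c\<psi>: "continuous_map (top_of_set (sphere 0 1)) (S1top V) \<psi>"
    using hm homeomorphic_maps_def by blast
  have inv: "\<phi> (\<psi> y) = y" if "y \<in> sphere 0 1" for y
    using hm that unfolding homeomorphic_maps_def by auto
  have cE: "continuous_map (S1top V) (top_of_set (sphere 0 1)) circ_emb"
    unfolding S1top_def using continuous_map_pullback[OF continuous_map_id, of V circ_emb "top_of_set (sphere 0 1)"]
    by simp
  define F where "F = circ_emb \<circ> \<psi>"
  have cF: "continuous_map (top_of_set (sphere 0 1)) (top_of_set (sphere 0 1)) F"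
    unfolding F_def using continuous_map_compose[OF c\<psi> cE] .
  then have cF': "continuous_on (sphere 0 1) F" and Fim: "F ` sphere 0 1 \<subseteq> sphere 0 1"
    by (auto simp: continuous_map_subtopology_eu)
  have \<psi>V: "\<psi> y \<in> V" if "y \<in> sphere 0 1" for y
    using continuous_map_funspace[OF c\<psi>] that by (auto simp: topspace_S1top)
  have injF: "inj_on F (sphere 0 1)"
  proof (rule inj_onI)
    fix y1 y2 assume y: "y1 \<in> sphere 0 1" "y2 \<in> sphere 0 1" "F y1 = F y2"
    then have "\<psi> y1 = \<psi> y2"
      using cis_inj01[of "\<psi> y1" "\<psi> y2"] \<psi>V[of y1] \<psi>V[of y2] sub by (auto simp: F_def circ_emb_def subset_iff)
    then show "y1 = y2" using inv y by metis
  qed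
  have full: "F ` sphere 0 1 = sphere 0 1" by (rule sphere_full[OF cF' injF Fim])
  have "circ_emb x \<in> sphere 0 1" by (simp add: circ_emb_def)
  then obtain y where y: "y \<in> sphere 0 1" "circ_emb (\<psi> y) = circ_emb x"
    using full unfolding F_def by (metis comp_apply imageE)
  then have "\<psi> y = x" using cis_inj01[of "\<psi> y" x] \<psi>V[of y] sub x by (auto simp: circ_emb_def subset_iff)
  then show ?thesis using \<psi>V y by blast
qed


theorem lemma4p5:
  fixes V :: "real set" and E :: "(real \<times> real) set" and dV :: "real \<Rightarrow> real \<Rightarrow> real"
    and u :: real
  assumes "cyclic_graph V E"
    and "closed_graph V"
    and "continuous_graph V E"
    and "metric_for V E dV"
    and "S1top V homeomorphic_space top_of_set (sphere (0::complex) 1)"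
    and "u \<in> V"
  shows "continuous_map (top_of_set {0..gammaV E dV u}) (S1top V) (\<lambda>r. g V E dV r u)"
proof -
  have sub: "V \<subseteq> {0..<1}" using assms(1) by (auto simp: cyclic_graph_def circ_digraph_def)
  have Vfull: "x \<in> V" if "x \<in> {0..<1}" for x using V_full[OF sub assms(5) that] .
  have ms: "Metric_space V dV" and mt: "Metric_space.mtopology V dV = S1top V"
    and mono: "\<And>u0 u1 u2. (u0,u1)\<in>E \<Longrightarrow> (u1,u2)\<in>E \<Longrightarrow> dV u0 u1 < dV u0 u2"
    using assms(4) by (auto simp: metric_for_def)
  have cyc: "\<And>u0 u1 w. (u0,u1)\<in>E \<Longrightarrow> w\<in>V \<Longrightarrow> 0 < dS1 u0 w \<Longrightarrow> dS1 u0 w < dS1 u0 u1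
      \<Longrightarrow> (u0,w)\<in>E \<and> (w,u1)\<in>E"
    using assms(1) unfolding cyclic_graph_def by blast
  have EV: "(a,b) \<in> E \<Longrightarrow> b \<in> V" for a b using assms(1) unfolding cyclic_graph_def circ_digraph_def by blast
  have uV: "u \<in> {0..<1}" using sub assms(6) by auto
  have dS1_bnd: "0 \<le> dS1 x y" "dS1 x y < 1" for x y by (simp_all add: dS1_def frac_lt_1)
  define \<gamma> where "\<gamma> = gamma E 1 u"
  define A where "A = {(\<Sum>i<(1::nat). dS1 (us i) (us (Suc i))) | us. us 0 = u \<and> (\<forall>i<1. (us i, us (Suc i)) \<in> E)}"
  have \<gamma>def: "\<gamma> = Sup (insert 0 A)" unfolding \<gamma>_def A_def gamma_def by (rule refl)
  have Aeq: "\<exists>w. (u,w) \<in> E \<and> a = dS1 u w" if "a \<in> A" for a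
    using that unfolding A_def by auto
  have bdd: "bdd_above (insert 0 A)"
    unfolding bdd_above_def using Aeq dS1_bnd by (metis insertE less_eq_real_def zero_less_one)
  have \<gamma>0: "0 \<le> \<gamma>" unfolding \<gamma>def using cSup_upper[OF _ bdd] by simp
  have edge_exists: "\<exists>w. (u,w)\<in>E \<and> t < dS1 u w" if "0 \<le> t" "t < \<gamma>" for t
  proof -
    have "t < Sup (insert 0 A)" using that(2) \<gamma>def by simp
    then obtain a where "a \<in> insert 0 A" "t < a" using less_cSup_iff[OF insert_not_empty bdd] by blast
    then show ?thesis using Aeq that(1) by fastforce
  qed
  define p where "p t = frac (u + t)" for t
  have pV: "p t \<in> V" for t using Vfull by (simp add: p_def frac_lt_1)
  have dS1p: "dS1 u (p t) = t" if "t \<in> {0..<1}" for t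
    using that by (simp add: dS1_def p_def frac_sub1 frac_eq_id)
  have pdS1: "p (dS1 u w) = w" if "w \<in> {0..<1}" for w
  proof -
    have "p (dS1 u w) = frac (u + (w - u))" by (simp add: p_def dS1_def frac_add_simps(2))
    then show ?thesis using that by (simp add: frac_eq_id)
  qed
  define c where "c = dS1 u (f1 E u)"
  have c01: "0 \<le> c" "c < 1" unfolding c_def using dS1_bnd by auto
  have c\<gamma>: "c \<le> \<gamma>"
  proof -
    have "c = frac \<gamma>" unfolding c_def dS1_def f1_def \<gamma>_def[symmetric] by (simp add: frac_sub1)
    also have "\<dots> \<le> \<gamma>" using \<gamma>0 by (simp add: frac_def)
    finally show ?thesis .
  qed
  have f1p: "f1 E u = p c" unfolding c_def
    by (rule pdS1[symmetric]) (simp add: f1_def frac_lt_1)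
  define h where "h t = dV u (p t)" for t
  have pc: "continuous_map euclideanreal (S1top V) p"
    unfolding S1top_def
  proof (rule continuous_map_pullback')
    have eq: "circ_emb \<circ> p = (\<lambda>t. cis (2 * pi * (u + t)))"
      by (auto simp: circ_emb_def p_def cis_frac)
    show "continuous_map euclideanreal (top_of_set (sphere 0 1)) (circ_emb \<circ> p)"
      unfolding eq continuous_map_in_subtopology
      by (auto simp: continuous_map_iff_continuous2 intro!: continuous_intros)
    show "topspace euclideanreal \<subseteq> p -` V" using pV by auto
  qed
  have cd: "continuous_map (S1top V) euclideanreal (dV u)"
    using continuous_on_mdist[of u "metric (V, dV)"] assms(6)
    by (simp add: Metric_space.mtopology_of[OF ms] Metric_space.mdist_metric[OF ms]
        Metric_space.mspace_metric[OF ms] mt)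
  have hc: "continuous_on UNIV h"
  proof -
    have "continuous_map euclideanreal euclideanreal h"
      unfolding h_def using continuous_map_compose[OF pc cd] by (simp add: o_def)
    then show ?thesis by (simp add: continuous_map_iff_continuous2)
  qed
  have p0: "p 0 = u" using uV by (simp add: p_def frac_eq_id)
  have h0: "h 0 = 0" unfolding h_def p0 using Metric_space.zero[OF ms assms(6) assms(6)] by simp
  have hnn: "0 \<le> h t" for t unfolding h_def using Metric_space.nonneg[OF ms] by simp
  have hstrict: "h s < h t" if st: "0 \<le> s" "s < t" "t < c" for s t
  proof (cases "s = 0")
    case True
    have t01: "t \<in> {0..<1}" using st c01 by auto
    have "p t \<noteq> u"
    proof
      assume "p t = u"
      then have "dS1 u u = t" using dS1p[OF t01] by simp
      then show False using st True by (simp add: dS1_def)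
    qed
    then have "h t \<noteq> 0" unfolding h_def using Metric_space.zero[OF ms assms(6) pV] by simp
    then show ?thesis using True h0 hnn[of t] by simp
  next
    case False
    then have s0: "0 < s" using st by simp
    obtain w where w: "(u,w) \<in> E" "t < dS1 u w" using edge_exists[of t] st c\<gamma> by auto
    have wV: "w \<in> {0..<1}" using EV[OF w(1)] sub by auto
    have s01: "s \<in> {0..<1}" "t \<in> {0..<1}" using st c01 by auto
    have e1: "(u, p s) \<in> E" "(p s, w) \<in> E"
      using cyc[OF w(1) pV, of s] dS1p[OF s01(1)] s0 st w(2) by auto
    have d1: "dS1 (p s) (p t) = t - s"
    proof -
      have "dS1 (p s) (p t) = frac (t - s)"
        by (simp add: dS1_def p_def frac_diff_simp frac_sub1)
      then show ?thesis using st c01 by (simp add: frac_eq_id)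
    qed
    have d2: "dS1 (p s) w = dS1 u w - s"
    proof -
      have "dS1 (p s) w = frac (frac (w - u) - s)"
        by (simp add: dS1_def p_def frac_diff_simp frac_sub1 algebra_simps)
      also have "\<dots> = frac (w - u) - s"
        using s0 st w(2) dS1_bnd[of u w] by (intro frac_eq_id) (auto simp: dS1_def)
      finally show ?thesis by (simp add: dS1_def)
    qed
    have "(p s, p t) \<in> E"
      using cyc[OF e1(2) pV, of t] d1 d2 st w(2) by auto
    then show ?thesis unfolding h_def using mono[OF e1(1)] by blast
  qed
  have hstrict2: "h s < h t" if st: "0 \<le> s" "s < t" "t \<le> c" for s t
  proof (cases "t < c")
    case True then show ?thesis using hstrict st by blast
  next
    case False
    then have tc: "t = c" using st by simp
    define m where "m = (s + c) / 2"
    have m: "s < m" "m < c" using st tc by (auto simp: m_def)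
    have "h m \<le> h c"
    proof (rule continuous_ge_on_closure[where S="{m<..<c}" and f=h and x=c and a="h m"])
      show "continuous_on (closure {m<..<c}) h" using hc continuous_on_subset by blast
      show "c \<in> closure {m<..<c}" using m by simp
      fix x assume "x \<in> {m<..<c}"
      then show "h m \<le> h x" using hstrict[of m x] m st by auto
    qed
    then show ?thesis using hstrict[of s m] m st tc by auto
  qed
  have injh: "inj_on h {0..c}"
  proof (rule inj_onI)
    fix x y assume xy: "x \<in> {0..c}" "y \<in> {0..c}" "h x = h y"
    show "x = y"
    proof (rule ccontr)
      assume "x \<noteq> y"
      then have "x < y \<or> y < x" by auto
      then show False using hstrict2[of x y] hstrict2[of y x] xy by auto
    qed
  qed
  have himg: "h ` {0..c} = {0..h c}"
  proof
    show "h ` {0..c} \<subseteq> {0..h c}"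
    proof
      fix y assume "y \<in> h ` {0..c}"
      then obtain x where x: "x \<in> {0..c}" "y = h x" by auto
      then have "h x \<le> h c" using hstrict2[of x c] by (cases "x = c") auto
      then show "y \<in> {0..h c}" using x hnn by auto
    qed
    show "{0..h c} \<subseteq> h ` {0..c}"
    proof
      fix y assume y: "y \<in> {0..h c}"
      obtain x where "0 \<le> x" "x \<le> c" "h x = y"
        using IVT'[of h 0 y c] y h0 c01 continuous_on_subset[OF hc] by auto
      then show "y \<in> h ` {0..c}" by auto
    qed
  qed
  have gV: "gammaV E dV u = h c" by (simp add: gammaV_def f1p h_def)
  define k where "k = inv_into {0..c} h"
  have kc: "continuous_on {0..h c} k"
  proof -
    have "continuous_on (h ` {0..c}) k"
      by (rule continuous_on_inv) (auto simp: k_def inv_into_f_f[OF injh] intro: continuous_on_subset[OF hc])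
    then show ?thesis using himg by simp
  qed
  have kr: "k r \<in> {0..c} \<and> h (k r) = r" if "r \<in> {0..h c}" for r
    using that himg unfolding k_def by (metis inv_into_into f_inv_into_f)
  have geq: "g V E dV r u = p (k r)" if r: "r \<in> {0..h c}" for r
    unfolding g_def
  proof (rule the_equality)
    have k01: "k r \<in> {0..<1}" using kr[OF r] c01 by auto
    show "p (k r) \<in> arc V u (f1 E u) \<and> dV u (p (k r)) = r"
      using kr[OF r] pV dS1p[OF k01] by (auto simp: arc_def c_def[symmetric] h_def)
    fix w assume w: "w \<in> arc V u (f1 E u) \<and> dV u w = r"
    then have wV: "w \<in> V" "dS1 u w \<le> c" by (auto simp: arc_def c_def)
    have w01: "w \<in> {0..<1}" using wV sub by auto
    have "h (dS1 u w) = r" using w pdS1[OF w01] by (simp add: h_def)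
    then have "dS1 u w = k r" using kr[OF r] injh wV(2) dS1_bnd[of u w]
      by (metis atLeastAtMost_iff inj_on_def)
    then show "w = p (k r)" using pdS1[OF w01] by simp
  qed
  have "continuous_map (top_of_set {0..h c}) (S1top V) (p \<circ> k)"
    by (rule continuous_map_compose[OF _ pc]) (simp add: continuous_map_iff_continuous kc)
  then show ?thesis unfolding gV
    by (rule continuous_map_eq) (simp add: geq)
qed

end
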